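(* Let $n\ge3$, $m_1,\dots,m_n>0$, $M=\mathrm{diag}(m_1,\dots,m_n)$, $\omega\in\mathbb R$, and let $\varphi_1,\dots,\varphi_n$ be longitudes of a fixed-point configuration on the equator. Let $H,G$ be the $n\times n$ symmetric matrices with entries (for $i\ne j$) $H_{ij}=\frac{m_im_j}{\sin^3d_{ij}}$, $H_{ii}=-\sum_{j\neq i}H_{ij}\cos d_{ij}$, $G_{ij}=\frac{-2m_im_j\cos d_{ij}}{\sin^3 d_{ij}}$, $G_{ii}=-\sum_{j\neq i}G_{ij}$, let $H_\omega=H-\omega^2M$, and let $$L=\begin{bmatrix}0&0&M^{-1}&0\\0&0&0&M^{-1}\\H_\omega&0&0&0\\0&G&0&0\end{bmatrix}\in\mathbb C^{4n\times4n}.$$ Then $H_\omega M^{-1}$ and $GM^{-1}$ are diagonalizable. If $u\in\mathbb C^n$ is an eigenvector of $H_\omega M^{-1}$ (respectively of $GM^{-1}$) with eigenvalue $\lambda\neq0$, then there is a two-dimensional $L$-invariant subspace of $\mathbb C^{4n}$ on which, in a suitable basis, $L$ is $\begin{bmatrix}\sqrt\lambda&0\\0&-\sqrt\lambda\end{bmatrix}$. If $u$ is an eigenvector of $H_\omega M^{-1}$ (respectively of $GM^{-1}$) with eigenvalue $0$, then there is a two-dimensional $L$-invariant subspace of $\mathbb C^{4n}$ on which, in a suitable basis, $L$ is $\begin{bmatrix}0&1\\0&0\end{bmatrix}$.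
   Context: Masses lie on the equator of the unit sphere at longitudes $\varphi_i$, with geodesic distances $d_{ij}\in(0,\pi)$ for $i\ne j$. The force function is $V=\sum_{i<j}m_im_j\cot d_{ij}$ and a fixed point is a critical point of $V$ on the configuration space $\{d_{ij}\notin\{0,\pi\}\}\subset(\mathbb S^2)^n$. Here $\sqrt\lambda$ denotes any complex square root of $\lambda$. *)

theory Defs
  imports "HOL-Analysis.Analysis" "Jordan_Normal_Form.Char_Poly"
begin

text \<open>Points of the unit sphere are unit vectors in real^3; masses and bodies are indexed by 0..<n.\<close>

definition geod :: "real^3 \<Rightarrow> real^3 \<Rightarrow> real" where
  "geod x y = arccos (x \<bullet> y)"

definition equator_pt :: "real \<Rightarrow> real^3" where
  "equator_pt \<phi> = vector [cos \<phi>, sin \<phi>, 0]"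

definition force_fun :: "nat \<Rightarrow> (nat \<Rightarrow> real) \<Rightarrow> (nat \<Rightarrow> real^3) \<Rightarrow> real" where
  "force_fun n m q = (\<Sum>(i,j)\<in>{(i,j). i < j \<and> j < n}. m i * m j * cot (geod (q i) (q j)))"

definition config_space :: "nat \<Rightarrow> (nat \<Rightarrow> real^3) set" where
  "config_space n = {q. (\<forall>i<n. norm (q i) = 1) \<and>
     (\<forall>i<n. \<forall>j<n. i \<noteq> j \<longrightarrow> geod (q i) (q j) \<noteq> 0 \<and> geod (q i) (q j) \<noteq> pi)}"

text \<open>Critical point of V on the configuration space in (S^2)^n: the derivative of V
  along every differentiable curve in (S^2)^n through q vanishes.\<close>
definition fixed_point :: "nat \<Rightarrow> (nat \<Rightarrow> real) \<Rightarrow> (nat \<Rightarrow> real^3) \<Rightarrow> bool" where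
  "fixed_point n m q \<longleftrightarrow> q \<in> config_space n \<and>
     (\<forall>\<gamma> :: real \<Rightarrow> nat \<Rightarrow> real^3.
        (\<forall>t. \<forall>i<n. norm (\<gamma> t i) = 1) \<longrightarrow> (\<forall>i<n. \<gamma> 0 i = q i) \<longrightarrow>
        (\<forall>i<n. (\<lambda>t. \<gamma> t i) differentiable (at 0)) \<longrightarrow>
        ((\<lambda>t. force_fun n m (\<gamma> t)) has_real_derivative 0) (at 0))"

definition dist_eq :: "(nat \<Rightarrow> real) \<Rightarrow> nat \<Rightarrow> nat \<Rightarrow> real" where
  "dist_eq \<phi> i j = geod (equator_pt (\<phi> i)) (equator_pt (\<phi> j))"

definition Hoff :: "(nat \<Rightarrow> real) \<Rightarrow> (nat \<Rightarrow> real) \<Rightarrow> nat \<Rightarrow> nat \<Rightarrow> real" where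
  "Hoff m \<phi> i j = m i * m j / (sin (dist_eq \<phi> i j)) ^ 3"

definition Goff :: "(nat \<Rightarrow> real) \<Rightarrow> (nat \<Rightarrow> real) \<Rightarrow> nat \<Rightarrow> nat \<Rightarrow> real" where
  "Goff m \<phi> i j = -2 * m i * m j * cos (dist_eq \<phi> i j) / (sin (dist_eq \<phi> i j)) ^ 3"

definition Hmat :: "nat \<Rightarrow> (nat \<Rightarrow> real) \<Rightarrow> (nat \<Rightarrow> real) \<Rightarrow> complex mat" where
  "Hmat n m \<phi> = mat n n (\<lambda>(i,j). complex_of_real
     (if i = j then - (\<Sum>k\<in>{0..<n} - {i}. Hoff m \<phi> i k * cos (dist_eq \<phi> i k))
      else Hoff m \<phi> i j))"

definition Gmat :: "nat \<Rightarrow> (nat \<Rightarrow> real) \<Rightarrow> (nat \<Rightarrow> real) \<Rightarrow> complex mat" where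
  "Gmat n m \<phi> = mat n n (\<lambda>(i,j). complex_of_real
     (if i = j then - (\<Sum>k\<in>{0..<n} - {i}. Goff m \<phi> i k) else Goff m \<phi> i j))"

definition Mmat :: "nat \<Rightarrow> (nat \<Rightarrow> real) \<Rightarrow> complex mat" where
  "Mmat n m = mat_diag n (\<lambda>i. complex_of_real (m i))"

definition Minv :: "nat \<Rightarrow> (nat \<Rightarrow> real) \<Rightarrow> complex mat" where
  "Minv n m = mat_diag n (\<lambda>i. complex_of_real (1 / m i))"

definition Homega :: "nat \<Rightarrow> (nat \<Rightarrow> real) \<Rightarrow> (nat \<Rightarrow> real) \<Rightarrow> real \<Rightarrow> complex mat" where
  "Homega n m \<phi> \<omega> = Hmat n m \<phi> - complex_of_real (\<omega>^2) \<cdot>\<^sub>m Mmat n m"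

definition Lmat :: "nat \<Rightarrow> (nat \<Rightarrow> real) \<Rightarrow> (nat \<Rightarrow> real) \<Rightarrow> real \<Rightarrow> complex mat" where
  "Lmat n m \<phi> \<omega> = four_block_mat
     (0\<^sub>m (2*n) (2*n))
     (four_block_mat (Minv n m) (0\<^sub>m n n) (0\<^sub>m n n) (Minv n m))
     (four_block_mat (Homega n m \<phi> \<omega>) (0\<^sub>m n n) (0\<^sub>m n n) (Gmat n m \<phi>))
     (0\<^sub>m (2*n) (2*n))"

definition diagonalizable :: "'a::semiring_1 mat \<Rightarrow> bool" where
  "diagonalizable A \<longleftrightarrow> square_mat A \<and> (\<exists>D. diagonal_mat D \<and> similar_mat A D)"

definition mat2 :: "'a::zero \<Rightarrow> 'a \<Rightarrow> 'a \<Rightarrow> 'a \<Rightarrow> 'a mat" where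
  "mat2 a b c d = mat 2 2 (\<lambda>(i,j). if i = 0 then (if j = 0 then a else b) else (if j = 0 then c else d))"

text \<open>There is a two-dimensional L-invariant subspace, with basis v1, v2, such that the
  matrix of L restricted to it in this basis is B (column j = coordinates of L v_j).\<close>
definition has_invariant_2block :: "complex mat \<Rightarrow> complex mat \<Rightarrow> bool" where
  "has_invariant_2block L B \<longleftrightarrow> (\<exists>v1 v2.
     v1 \<in> carrier_vec (dim_row L) \<and> v2 \<in> carrier_vec (dim_row L) \<and>
     (\<forall>a b. a \<cdot>\<^sub>v v1 + b \<cdot>\<^sub>v v2 = 0\<^sub>v (dim_row L) \<longrightarrow> a = 0 \<and> b = 0) \<and>
     L *\<^sub>v v1 = B $$ (0,0) \<cdot>\<^sub>v v1 + B $$ (1,0) \<cdot>\<^sub>v v2 \<and>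
     L *\<^sub>v v2 = B $$ (0,1) \<cdot>\<^sub>v v1 + B $$ (1,1) \<cdot>\<^sub>v v2)"

end

theory Submission imports Defs "Jordan_Normal_Form.Jordan_Normal_Form_Uniqueness" "Jordan_Normal_Form.Jordan_Normal_Form_Existence" begin
lemma herm_adj: fixes K :: "complex mat"
  assumes K: "K \<in> carrier_mat n n" and h: "\<And>i j. i<n \<Longrightarrow> j<n \<Longrightarrow> K$$(i,j) = cnj (K$$(j,i))"
   and x: "x \<in> carrier_vec n" and y: "y \<in> carrier_vec n"
  shows "(K *\<^sub>v x) \<bullet>c y = x \<bullet>c (K *\<^sub>v y)"
proof -
  have "(K *\<^sub>v x) \<bullet>c y = (\<Sum>i<n. (\<Sum>j<n. K$$(i,j) * x$j) * cnj (y$i))"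
    using K x y by (simp add: scalar_prod_def mult_mat_vec_def row_def lessThan_atLeast0)
  also have "\<dots> = (\<Sum>i<n. \<Sum>j<n. x$j * (K$$(i,j) * cnj (y$i)))"
    by (simp add: sum_distrib_left sum_distrib_right mult_ac)
  also have "\<dots> = (\<Sum>j<n. \<Sum>i<n. x$j * (K$$(i,j) * cnj (y$i)))"
    by (rule sum.swap)
  also have "\<dots> = (\<Sum>j<n. x$j * cnj (\<Sum>i<n. K$$(j,i) * y$i))"
    by (auto simp add: sum_distrib_left cnj_sum mult_ac intro!: sum.cong dest: h)
  also have "\<dots> = x \<bullet>c (K *\<^sub>v y)"
    using K x y by (simp add: scalar_prod_def mult_mat_vec_def row_def lessThan_atLeast0)
  finally show ?thesis .
qed

lemma herm_ker: fixes K :: "complex mat"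
  assumes K: "K \<in> carrier_mat n n" and h: "\<And>i j. i<n \<Longrightarrow> j<n \<Longrightarrow> K$$(i,j) = cnj (K$$(j,i))"
   and v: "v \<in> carrier_vec n"
   and z: "char_matrix K e *\<^sub>v (char_matrix K e *\<^sub>v v) = 0\<^sub>v n"
  shows "char_matrix K e *\<^sub>v v = 0\<^sub>v n"
proof (rule ccontr)
  define N where "N = char_matrix K e"
  define w where "w = N *\<^sub>v v"
  assume "char_matrix K e *\<^sub>v v \<noteq> 0\<^sub>v n"
  hence wnz: "w \<noteq> 0\<^sub>v n" unfolding w_def N_def .
  have N: "N \<in> carrier_mat n n" unfolding N_def using K by simp
  have w: "w \<in> carrier_vec n" unfolding w_def using N v by simp
  have "eigenvector K w e" using z wnz w K
    unfolding eigenvector_char_matrix[OF K] w_def N_def by simp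
  hence Kw: "K *\<^sub>v w = e \<cdot>\<^sub>v w" unfolding eigenvector_def by simp
  have ww: "w \<bullet>c w \<noteq> 0" using w wnz by simp
  have "e * (w \<bullet>c w) = (K *\<^sub>v w) \<bullet>c w" unfolding Kw using w
    by (subst smult_scalar_prod_distrib[of _ n], auto)
  also have "\<dots> = w \<bullet>c (K *\<^sub>v w)" by (rule herm_adj[OF K h w w])
  also have "\<dots> = cnj e * (w \<bullet>c w)" unfolding Kw conjugate_smult_vec using w
    by (subst scalar_prod_smult_distrib[of _ n], auto)
  finally have er: "cnj e = e" using ww by (metis mult_cancel_right)
  have hN: "\<And>i j. i<n \<Longrightarrow> j<n \<Longrightarrow> N$$(i,j) = cnj (N$$(j,i))"
  proof -
    fix i j assume ij: "i<n" "j<n"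
    have e1: "N$$(i,j) = K$$(i,j) + (if i = j then -e else 0)" using K ij unfolding N_def char_matrix_def by auto
    have e2: "N$$(j,i) = K$$(j,i) + (if i = j then -e else 0)" using K ij unfolding N_def char_matrix_def by auto
    have hij: "cnj (K$$(j,i)) = K$$(i,j)" using h[OF ij] by simp
    show "N$$(i,j) = cnj (N$$(j,i))" unfolding e1 e2 complex_cnj_add
      using hij er by (cases "i = j") auto
  qed
  have "w \<bullet>c w = (N *\<^sub>v v) \<bullet>c w" unfolding w_def ..
  also have "\<dots> = v \<bullet>c (N *\<^sub>v w)" by (rule herm_adj[OF N hN v w])
  also have "N *\<^sub>v w = 0\<^sub>v n" using z unfolding w_def N_def .
  finally have "w \<bullet>c w = 0" using v by simp
  with ww show False by simp
qed
lemma mult_zero_vec': "C \<in> carrier_mat nr n \<Longrightarrow> C *\<^sub>v 0\<^sub>v n = 0\<^sub>v nr"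
  by (intro eq_vecI) (auto simp: row_def)

lemma gen2: fixes K :: "complex mat"
  assumes K: "K \<in> carrier_mat n n" and h: "\<And>i j. i<n \<Longrightarrow> j<n \<Longrightarrow> K$$(i,j) = cnj (K$$(j,i))"
  shows "dim_gen_eigenspace K ev 2 = dim_gen_eigenspace K ev 1"
proof -
  define C where "C = char_matrix K ev"
  have C: "C \<in> carrier_mat n n" unfolding C_def using K by simp
  have p1: "C ^\<^sub>m 1 = C" using C by simp
  have p2: "C ^\<^sub>m 2 = C * C" using C by (simp add: numeral_2_eq_2)
  have CC: "C * C \<in> carrier_mat n n" using C by simp
  have ker: "mat_kernel (C * C) = mat_kernel C"
  proof -
    have "\<And>v. v \<in> carrier_vec n \<Longrightarrow> (C * C) *\<^sub>v v = C *\<^sub>v (C *\<^sub>v v)"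
      using C by (simp add: assoc_mult_mat_vec)
    moreover have "\<And>v. v \<in> carrier_vec n \<Longrightarrow> C *\<^sub>v (C *\<^sub>v v) = 0\<^sub>v n \<Longrightarrow> C *\<^sub>v v = 0\<^sub>v n"
      unfolding C_def by (rule herm_ker[OF K h])
    moreover have "\<And>v. v \<in> carrier_vec n \<Longrightarrow> C *\<^sub>v v = 0\<^sub>v n \<Longrightarrow> C *\<^sub>v (C *\<^sub>v v) = 0\<^sub>v n"
      using C by (simp add: mult_zero_vec')
    ultimately show ?thesis unfolding mat_kernel[OF CC] mat_kernel[OF C] by auto
  qed
  have "dim_col (C * C) = dim_col C" using C by simp
  thus ?thesis unfolding dim_gen_eigenspace_def kernel_dim_def C_def[symmetric] p1 p2 ker
    by simp
qed

lemma sum_list_le_eq: fixes f g :: "'a \<Rightarrow> nat"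
  assumes "(\<Sum>x\<leftarrow>xs. f x) = (\<Sum>x\<leftarrow>xs. g x)" and "x \<in> set xs" and "\<And>x. g x \<le> f x"
  shows "f x = g x"
  using assms
proof (induct xs)
  case (Cons a xs)
  have "(\<Sum>x\<leftarrow>xs. g x) \<le> (\<Sum>x\<leftarrow>xs. f x)" by (rule sum_list_mono) (use Cons in auto)
  with Cons(2) Cons(4)[of a] have "f a = g a" "(\<Sum>x\<leftarrow>xs. f x) = (\<Sum>x\<leftarrow>xs. g x)" by auto
  with Cons show ?case by auto
qed simp

lemma jordan_matrix_diag: "\<forall>(d,a)\<in>set n_as. d = 1 \<Longrightarrow> diagonal_mat (jordan_matrix (n_as :: (nat \<times> complex) list))"
proof (induct n_as)
  case Nil
  then show ?case by (simp add: jordan_matrix_def diagonal_mat_def)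
next
  case (Cons da n_as)
  obtain d a where da: "da = (d,a)" by force
  with Cons have d: "d = 1" and IH: "diagonal_mat (jordan_matrix n_as)" by auto
  show ?case using IH unfolding da d jordan_matrix_def diagonal_mat_def
    by (auto simp: Let_def)
qed

lemma herm_diagonalizable: fixes K :: "complex mat"
  assumes K: "K \<in> carrier_mat n n" and h: "\<And>i j. i<n \<Longrightarrow> j<n \<Longrightarrow> K$$(i,j) = cnj (K$$(j,i))"
  shows "diagonalizable K"
proof -
  from char_poly_factorized[OF K] obtain as where "char_poly K = (\<Prod>a\<leftarrow>as. [:- a, 1:])" by auto
  from jordan_nf_exists[OF K this] obtain n_as where jnf: "jordan_nf K n_as" ..
  have "\<forall>(d,a)\<in>set n_as. d = 1"
  proof (intro ballI, clarify)
    fix d a assume da: "(d,a) \<in> set n_as"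
    have "(\<Sum>x\<leftarrow>map fst [(n, e)\<leftarrow>n_as . e = a]. min 2 x) = (\<Sum>x\<leftarrow>map fst [(n, e)\<leftarrow>n_as . e = a]. min 1 x)"
      using gen2[OF K h, of a] unfolding dim_gen_eigenspace[OF jnf] .
    moreover have "d \<in> set (map fst [(n, e)\<leftarrow>n_as . e = a])" using da by force
    ultimately have "min 2 d = min 1 d" by (rule sum_list_le_eq[where f = "min 2" and g = "min 1"]) auto
    moreover have "d \<noteq> 0" using jnf da unfolding jordan_nf_def by force
    ultimately show "d = 1" by linarith
  qed
  hence "diagonal_mat (jordan_matrix n_as)" by (rule jordan_matrix_diag)
  moreover have "similar_mat K (jordan_matrix n_as)" using jnf unfolding jordan_nf_def by auto
  moreover have "square_mat K" using K by simp
  ultimately show ?thesis unfolding diagonalizable_def by blast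
qed
lemma weighted_diag: fixes R :: "complex mat"
  assumes R: "R \<in> carrier_mat n n" and h: "\<And>i j. i<n \<Longrightarrow> j<n \<Longrightarrow> R$$(i,j) = cnj (R$$(j,i))"
  and w: "\<And>i. i < n \<Longrightarrow> w i > 0"
  shows "diagonalizable (R * mat_diag n (\<lambda>i. complex_of_real (w i)))"
proof -
  define s where "s = (\<lambda>i. complex_of_real (sqrt (w i)))"
  define t where "t = (\<lambda>i. complex_of_real (1 / sqrt (w i)))"
  define K where "K = mat n n (\<lambda>(i,j). s i * R$$(i,j) * s j)"
  have K: "K \<in> carrier_mat n n" unfolding K_def by simp
  have hK: "K$$(i,j) = cnj (K$$(j,i))" if ij: "i<n" "j<n" for i j
  proof -
    have "cnj (R$$(j,i)) = R$$(i,j)" using h[OF ij] by simp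
    thus ?thesis using ij unfolding K_def s_def by simp
  qed
  have dK: "diagonalizable K" by (rule herm_diagonalizable[OF K hK])
  define S where "S = mat_diag n s"
  define T where "T = mat_diag n t"
  have ts: "t i * s i = 1" if "i < n" for i
    using w[OF that] unfolding t_def s_def by (simp flip: of_real_mult)
  have ss: "s i * s i = complex_of_real (w i)" if "i < n" for i
    using w[OF that] unfolding s_def by (simp flip: of_real_mult)
  have st: "s i * t i = 1" if "i < n" for i using ts[OF that] by (simp add: mult.commute)
  have TS1: "T * S = 1\<^sub>m n" unfolding T_def S_def mat_diag_diag
    by (rule eq_matI) (auto simp: mat_diag_def ts)
  have TS2: "S * T = 1\<^sub>m n" unfolding T_def S_def mat_diag_diag
    by (rule eq_matI) (auto simp: mat_diag_def st)
  note TS = TS1 TS2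
  have A: "R * mat_diag n (\<lambda>i. complex_of_real (w i)) = T * K * S"
  proof -
    have "T * K = mat n n (\<lambda>(i,j). t i * K $$ (i,j))" unfolding T_def by (rule mat_diag_mult_left[OF K])
    hence "T * K * S = mat n n (\<lambda>(i,j). t i * K $$ (i,j) * s j)" unfolding S_def
      by (subst mat_diag_mult_right[of _ n], auto)
    moreover have "R * mat_diag n (\<lambda>i. complex_of_real (w i)) = mat n n (\<lambda>(i,j). R $$ (i,j) * complex_of_real (w j))"
      by (rule mat_diag_mult_right[OF R])
    moreover have "t i * K $$ (i,j) * s j = R $$ (i,j) * complex_of_real (w j)" if "i<n" "j<n" for i j
    proof -
      have "t i * K $$ (i,j) * s j = (t i * s i) * R$$(i,j) * (s j * s j)"
        using that unfolding K_def by (simp add: mult_ac)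
      thus ?thesis using ts[OF that(1)] ss[OF that(2)] by simp
    qed
    ultimately show ?thesis by (auto intro!: eq_matI)
  qed
  have "similar_mat_wit (R * mat_diag n (\<lambda>i. complex_of_real (w i))) K T S"
    by (rule similar_mat_witI[OF TS(1) TS(2) A]) (use R K in \<open>auto simp: T_def S_def\<close>)
  hence sim: "similar_mat (R * mat_diag n (\<lambda>i. complex_of_real (w i))) K" unfolding similar_mat_def by blast
  from dK obtain D where "diagonal_mat D" "similar_mat K D" unfolding diagonalizable_def by blast
  moreover have "square_mat (R * mat_diag n (\<lambda>i. complex_of_real (w i)))" using R by (simp add: mat_diag_def)
  ultimately show ?thesis unfolding diagonalizable_def using similar_mat_trans[OF sim] by blast
qed
lemma dist_eq_sym: "dist_eq \<phi> i j = dist_eq \<phi> j i"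
  by (simp add: dist_eq_def geod_def inner_commute)

lemma Hoff_sym: "Hoff m \<phi> i j = Hoff m \<phi> j i"
  unfolding Hoff_def by (simp add: dist_eq_sym[of \<phi> i j] mult.commute)

lemma Goff_sym: "Goff m \<phi> i j = Goff m \<phi> j i"
  unfolding Goff_def by (simp add: dist_eq_sym[of \<phi> i j] mult_ac)

lemma Homega_carrier: "Homega n m \<phi> \<omega> \<in> carrier_mat n n"
  unfolding Homega_def Mmat_def by (intro minus_carrier_mat smult_carrier_mat mat_diag_dim)

lemma Gmat_carrier: "Gmat n m \<phi> \<in> carrier_mat n n"
  unfolding Gmat_def by (rule mat_carrier)

lemma Minv_carrier: "Minv n m \<in> carrier_mat n n"
  unfolding Minv_def by (rule mat_diag_dim)

lemma Hmat_idx: "i < n \<Longrightarrow> j < n \<Longrightarrow> Hmat n m \<phi> $$ (i,j) = complex_of_real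
     (if i = j then - (\<Sum>k\<in>{0..<n} - {i}. Hoff m \<phi> i k * cos (dist_eq \<phi> i k))
      else Hoff m \<phi> i j)"
  unfolding Hmat_def by (simp only: index_mat split)

lemma Gmat_idx: "i < n \<Longrightarrow> j < n \<Longrightarrow> Gmat n m \<phi> $$ (i,j) = complex_of_real
     (if i = j then - (\<Sum>k\<in>{0..<n} - {i}. Goff m \<phi> i k) else Goff m \<phi> i j)"
  unfolding Gmat_def by (simp only: index_mat split)

lemma Homega_idx: "i < n \<Longrightarrow> j < n \<Longrightarrow> Homega n m \<phi> \<omega> $$ (i,j) =
   Hmat n m \<phi> $$ (i,j) - complex_of_real (\<omega>^2) * (if i = j then complex_of_real (m i) else 0)"
  unfolding Homega_def Mmat_def
  by (subst index_minus_mat) (auto simp: mat_diag_def)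

lemma Homega_herm: "i < n \<Longrightarrow> j < n \<Longrightarrow> Homega n m \<phi> \<omega> $$ (i,j) = cnj (Homega n m \<phi> \<omega> $$ (j,i))"
proof -
  assume ij: "i < n" "j < n"
  show ?thesis
  proof (cases "i = j")
    case True
    show ?thesis unfolding True Homega_idx[OF ij(2) ij(2)] Hmat_idx[OF ij(2) ij(2)]
      by (simp only: complex_cnj_diff complex_cnj_mult complex_cnj_complex_of_real if_True simp_thms)
  next
    case False
    hence F: "j \<noteq> i" by simp
    show ?thesis unfolding Homega_idx[OF ij] Homega_idx[OF ij(2) ij(1)] Hmat_idx[OF ij] Hmat_idx[OF ij(2) ij(1)]
      using False F by (simp only: simp_thms if_False complex_cnj_zero complex_cnj_diff complex_cnj_mult complex_cnj_complex_of_real Hoff_sym[of m \<phi> j i])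
  qed
qed

lemma Gmat_herm: "i < n \<Longrightarrow> j < n \<Longrightarrow> Gmat n m \<phi> $$ (i,j) = cnj (Gmat n m \<phi> $$ (j,i))"
proof -
  assume ij: "i < n" "j < n"
  show ?thesis
  proof (cases "i = j")
    case True
    show ?thesis unfolding True Gmat_idx[OF ij(2) ij(2)]
      by (simp only: complex_cnj_complex_of_real)
  next
    case False
    hence F: "j \<noteq> i" by simp
    show ?thesis unfolding Gmat_idx[OF ij] Gmat_idx[OF ij(2) ij(1)]
      using False F by (simp only: if_False complex_cnj_complex_of_real Goff_sym[of m \<phi> j i])
  qed
qed

lemma diag_part1:
  assumes "\<forall>i<n. m i > 0"
  shows "diagonalizable (Homega n m \<phi> \<omega> * Minv n m)"
  unfolding Minv_def
  by (rule weighted_diag[OF Homega_carrier Homega_herm], assumption, assumption) (use assms in auto)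

lemma diag_part2:
  assumes "\<forall>i<n. m i > 0"
  shows "diagonalizable (Gmat n m \<phi> * Minv n m)"
  unfolding Minv_def
  by (rule weighted_diag[OF Gmat_carrier Gmat_herm], assumption, assumption) (use assms in auto)

lemma mat_diag_mult_vec: "u \<in> carrier_vec n \<Longrightarrow> mat_diag n f *\<^sub>v u = vec n (\<lambda>i. f i * u $ i)"
proof (intro eq_vecI)
  fix i assume u: "u \<in> carrier_vec n" and i: "i < dim_vec (vec n (\<lambda>i. f i * u $ i))"
  hence i: "i < n" by simp
  have "(mat_diag n f *\<^sub>v u) $ i = (\<Sum>j = 0..<n. (if i = j then f j else 0) * u $ j)"
    using u i by (simp add: mat_diag_def scalar_prod_def row_def)
  also have "\<dots> = (\<Sum>j = 0..<n. if i = j then f j * u $ j else 0)" by (rule sum.cong) auto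
  also have "\<dots> = f i * u $ i" using i by simp
  finally show "(mat_diag n f *\<^sub>v u) $ i = vec n (\<lambda>i. f i * u $ i) $ i" using i by simp
qed (simp add: mat_diag_def)

lemma lc4:
  assumes "x1 \<in> carrier_vec n" "x2 \<in> carrier_vec n" "y1 \<in> carrier_vec n" "y2 \<in> carrier_vec n"
   "x1' \<in> carrier_vec n" "x2' \<in> carrier_vec n" "y1' \<in> carrier_vec n" "y2' \<in> carrier_vec n"
  shows "a \<cdot>\<^sub>v ((x1 @\<^sub>v x2) @\<^sub>v (y1 @\<^sub>v y2)) + b \<cdot>\<^sub>v ((x1' @\<^sub>v x2') @\<^sub>v (y1' @\<^sub>v y2'))
    = ((a \<cdot>\<^sub>v x1 + b \<cdot>\<^sub>v x1') @\<^sub>v (a \<cdot>\<^sub>v x2 + b \<cdot>\<^sub>v x2')) @\<^sub>v ((a \<cdot>\<^sub>v y1 + b \<cdot>\<^sub>v y1') @\<^sub>v (a \<cdot>\<^sub>v y2 + b \<cdot>\<^sub>v y2'))"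
  using assms by (intro eq_vecI) (auto simp: index_append_vec)

lemma zero4: "0\<^sub>v (n + n + (n + n)) = (0\<^sub>v n @\<^sub>v 0\<^sub>v n) @\<^sub>v (0\<^sub>v n @\<^sub>v 0\<^sub>v n)"
  by (intro eq_vecI) auto

lemma zero_mult_vec': "v \<in> carrier_vec nc \<Longrightarrow> 0\<^sub>m nr nc *\<^sub>v v = 0\<^sub>v nr"
  by (intro eq_vecI) auto

lemma Lmat_dim: "dim_row (Lmat n m \<phi> \<omega>) = n + n + (n + n)"
  unfolding Lmat_def by simp

lemma Lmat_mult:
  assumes "x1 \<in> carrier_vec n" "x2 \<in> carrier_vec n" "y1 \<in> carrier_vec n" "y2 \<in> carrier_vec n"
  shows "Lmat n m \<phi> \<omega> *\<^sub>v ((x1 @\<^sub>v x2) @\<^sub>v (y1 @\<^sub>v y2)) =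
    ((Minv n m *\<^sub>v y1) @\<^sub>v (Minv n m *\<^sub>v y2)) @\<^sub>v ((Homega n m \<phi> \<omega> *\<^sub>v x1) @\<^sub>v (Gmat n m \<phi> *\<^sub>v x2))"
proof -
  note c = Minv_carrier[of n m] Homega_carrier[of n m \<phi> \<omega>] Gmat_carrier[of n m \<phi>]
  have B: "four_block_mat (Minv n m) (0\<^sub>m n n) (0\<^sub>m n n) (Minv n m) \<in> carrier_mat (2*n) (2*n)"
    using four_block_carrier_mat[OF c(1) c(1)] by (simp add: mult_2)
  have C: "four_block_mat (Homega n m \<phi> \<omega>) (0\<^sub>m n n) (0\<^sub>m n n) (Gmat n m \<phi>) \<in> carrier_mat (2*n) (2*n)"
    using four_block_carrier_mat[OF c(2) c(3)] by (simp add: mult_2)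
  have a: "x1 @\<^sub>v x2 \<in> carrier_vec (2*n)" and d: "y1 @\<^sub>v y2 \<in> carrier_vec (2*n)"
    using assms by (auto simp: mult_2)
  have r1: "(Minv n m *\<^sub>v y1) @\<^sub>v (Minv n m *\<^sub>v y2) \<in> carrier_vec (2*n)"
    using c assms by (auto simp: mult_2)
  have r2: "(Homega n m \<phi> \<omega> *\<^sub>v x1) @\<^sub>v (Gmat n m \<phi> *\<^sub>v x2) \<in> carrier_vec (2*n)"
    using c assms by (auto simp: mult_2)
  have e1: "four_block_mat (Minv n m) (0\<^sub>m n n) (0\<^sub>m n n) (Minv n m) *\<^sub>v (y1 @\<^sub>v y2) = (Minv n m *\<^sub>v y1) @\<^sub>v (Minv n m *\<^sub>v y2)"
    by (rule mult_mat_vec_split[OF c(1) c(1) assms(3) assms(4)])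
  have e2: "four_block_mat (Homega n m \<phi> \<omega>) (0\<^sub>m n n) (0\<^sub>m n n) (Gmat n m \<phi>) *\<^sub>v (x1 @\<^sub>v x2) = (Homega n m \<phi> \<omega> *\<^sub>v x1) @\<^sub>v (Gmat n m \<phi> *\<^sub>v x2)"
    by (rule mult_mat_vec_split[OF c(2) c(3) assms(1) assms(2)])
  show ?thesis unfolding Lmat_def
    apply (subst four_block_mat_mult_vec[OF zero_carrier_mat B C zero_carrier_mat a d])
    unfolding e1 e2 zero_mult_vec'[OF a] zero_mult_vec'[OF d]
    using left_zero_vec[OF r1] right_zero_vec[OF r2] by simp
qed

lemma sm0: "x \<in> carrier_vec n \<Longrightarrow> y \<in> carrier_vec n \<Longrightarrow> a \<cdot>\<^sub>v x + 0 \<cdot>\<^sub>v y = a \<cdot>\<^sub>v (x :: complex vec)"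
  by (intro eq_vecI) auto
lemma sm0': "x \<in> carrier_vec n \<Longrightarrow> y \<in> carrier_vec n \<Longrightarrow> 0 \<cdot>\<^sub>v x + a \<cdot>\<^sub>v y = a \<cdot>\<^sub>v (y :: complex vec)"
  by (intro eq_vecI) auto
lemma sm0'': "x \<in> carrier_vec n \<Longrightarrow> y \<in> carrier_vec n \<Longrightarrow> x + 0 \<cdot>\<^sub>v y = (x :: complex vec)"
  by (intro eq_vecI) auto
lemma smz: "a \<cdot>\<^sub>v 0\<^sub>v n + b \<cdot>\<^sub>v 0\<^sub>v n = (0\<^sub>v n :: complex vec)"
  by (intro eq_vecI) auto
lemma sm1: "x \<in> carrier_vec n \<Longrightarrow> 1 \<cdot>\<^sub>v x = (x :: complex vec)"
  by (intro eq_vecI) auto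
lemma mat2_idx[simp]: "mat2 a b c d $$ (0,0) = a" "mat2 a b c d $$ (1,0) = c"
   "mat2 a b c d $$ (0,1) = b" "mat2 a b c d $$ (1,1) = d"
  unfolding mat2_def by auto

lemma nonzero_vec_idx: fixes u :: "'a :: zero vec" assumes "u \<in> carrier_vec n" "u \<noteq> 0\<^sub>v n" obtains i where "i < n" "u $ i \<noteq> 0"
proof -
  have "\<exists>i<n. u $ i \<noteq> 0"
  proof (rule ccontr)
    assume "\<not> ?thesis"
    hence "u = 0\<^sub>v n" using assms(1) by (intro eq_vecI) auto
    with assms(2) show False by simp
  qed
  thus ?thesis using that by blast
qed

lemma Minv_idx: fixes u :: "complex vec" shows "u \<in> carrier_vec n \<Longrightarrow> i < n \<Longrightarrow> (Minv n m *\<^sub>v u) $ i = complex_of_real (1 / m i) * u $ i"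
  unfolding Minv_def by (simp add: mat_diag_mult_vec)

lemma Minv_nz: fixes u :: "complex vec" assumes "\<forall>i<n. m i > 0" "u \<in> carrier_vec n" "i < n" "u $ i \<noteq> 0"
  shows "(Minv n m *\<^sub>v u) $ i \<noteq> 0"
proof -
  have "m i \<noteq> 0" using assms by auto
  thus ?thesis using assms by (simp add: Minv_idx)
qed

lemma block_H_nz:
  assumes mpos: "\<forall>i<n. m i > 0" and ev: "eigenvector (Homega n m \<phi> \<omega> * Minv n m) u lam"
    and lam: "lam \<noteq> 0" and s: "s^2 = lam"
  shows "has_invariant_2block (Lmat n m \<phi> \<omega>) (mat2 s 0 0 (-s))"
proof -
  note c = Minv_carrier[of n m] Homega_carrier[of n m \<phi> \<omega>] Gmat_carrier[of n m \<phi>]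
  let ?P = "Minv n m" and ?H = "Homega n m \<phi> \<omega>" and ?G = "Gmat n m \<phi>" and ?L = "Lmat n m \<phi> \<omega>"
  have u: "u \<in> carrier_vec n" "u \<noteq> 0\<^sub>v n" and eq: "(?H * ?P) *\<^sub>v u = lam \<cdot>\<^sub>v u"
    using ev c unfolding eigenvector_def by auto
  have Hu: "?H *\<^sub>v (?P *\<^sub>v u) = lam \<cdot>\<^sub>v u" using eq c u by (simp add: assoc_mult_mat_vec)
  have s0: "s \<noteq> 0" using lam s by auto
  define z where "z = (0\<^sub>v n :: complex vec)"
  have z: "z \<in> carrier_vec n" unfolding z_def by simp
  have Pz: "?P *\<^sub>v z = z" and Gz: "?G *\<^sub>v z = z" unfolding z_def using c by (auto simp: mult_zero_vec')
  have Pu: "?P *\<^sub>v u \<in> carrier_vec n" using c u by simp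
  have szz: "a \<cdot>\<^sub>v z = z" for a :: complex unfolding z_def by (intro eq_vecI) auto
  have zz: "z + z = z" unfolding z_def by (intro eq_vecI) auto
  have gen: "?L *\<^sub>v (((1/t) \<cdot>\<^sub>v (?P *\<^sub>v u) @\<^sub>v z) @\<^sub>v (u @\<^sub>v z))
     = ((t \<cdot>\<^sub>v ((1/t) \<cdot>\<^sub>v (?P *\<^sub>v u)) @\<^sub>v z) @\<^sub>v ((t \<cdot>\<^sub>v u) @\<^sub>v z))" if t: "t^2 = lam" for t
  proof -
    have t0: "t \<noteq> 0" using lam t by auto
    have e1: "?P *\<^sub>v u = t \<cdot>\<^sub>v ((1/t) \<cdot>\<^sub>v (?P *\<^sub>v u))" using t0 Pu by (intro eq_vecI) auto
    have e2: "?H *\<^sub>v ((1/t) \<cdot>\<^sub>v (?P *\<^sub>v u)) = t \<cdot>\<^sub>v u"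
    proof -
      have "?H *\<^sub>v ((1/t) \<cdot>\<^sub>v (?P *\<^sub>v u)) = (1/t) \<cdot>\<^sub>v (lam \<cdot>\<^sub>v u)"
        using mult_mat_vec[OF c(2) Pu] Hu by simp
      also have "\<dots> = t \<cdot>\<^sub>v u" using t t0 u by (intro eq_vecI) (auto simp: power2_eq_square)
      finally show ?thesis .
    qed
    show ?thesis
      by (subst Lmat_mult) (use Pu u z in auto, simp add: Pz Gz e2 flip: e1)
  qed
  define q1 where "q1 = (1/s) \<cdot>\<^sub>v (?P *\<^sub>v u)"
  define q2 where "q2 = (1/(-s)) \<cdot>\<^sub>v (?P *\<^sub>v u)"
  define v1 where "v1 = (q1 @\<^sub>v z) @\<^sub>v (u @\<^sub>v z)"
  define v2 where "v2 = (q2 @\<^sub>v z) @\<^sub>v (u @\<^sub>v z)"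
  have q: "q1 \<in> carrier_vec n" "q2 \<in> carrier_vec n" unfolding q1_def q2_def using Pu by auto
  have dimL: "dim_row ?L = n + n + (n + n)" by (rule Lmat_dim)
  have v: "v1 \<in> carrier_vec (dim_row ?L)" "v2 \<in> carrier_vec (dim_row ?L)"
    unfolding dimL v1_def v2_def using q u z by auto
  have Lv1: "?L *\<^sub>v v1 = s \<cdot>\<^sub>v v1 + 0 \<cdot>\<^sub>v v2"
    unfolding v1_def v2_def gen[OF s, folded q1_def]
    by (subst lc4[of _ n], use q u z in auto, simp add: sm0[of _ n] q u z szz zz smz[unfolded z_def[symmetric]])
  have s2: "(-s)^2 = lam" using s by simp
  have Lv2: "?L *\<^sub>v v2 = 0 \<cdot>\<^sub>v v1 + (-s) \<cdot>\<^sub>v v2"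
    unfolding v1_def v2_def gen[OF s2, folded q2_def]
    by (subst lc4[of _ n], use q u z in auto, simp add: sm0'[of _ n] q u z szz zz smz[unfolded z_def[symmetric]])
  have indep: "a = 0 \<and> b = 0" if ab: "a \<cdot>\<^sub>v v1 + b \<cdot>\<^sub>v v2 = 0\<^sub>v (dim_row ?L)" for a b
  proof -
    obtain i where i: "i < n" "u $ i \<noteq> 0" using nonzero_vec_idx[OF u] by blast
    have pi: "(?P *\<^sub>v u) $ i \<noteq> 0" by (rule Minv_nz[OF mpos u(1) i])
    have "((a \<cdot>\<^sub>v q1 + b \<cdot>\<^sub>v q2) @\<^sub>v (a \<cdot>\<^sub>v z + b \<cdot>\<^sub>v z)) @\<^sub>v ((a \<cdot>\<^sub>v u + b \<cdot>\<^sub>v u) @\<^sub>v (a \<cdot>\<^sub>v z + b \<cdot>\<^sub>v z))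
       = (0\<^sub>v n @\<^sub>v 0\<^sub>v n) @\<^sub>v (0\<^sub>v n @\<^sub>v 0\<^sub>v n)"
      using ab unfolding dimL zero4 v1_def v2_def by (subst (asm) lc4[of _ n]) (use q u z in auto)
    hence e1: "a \<cdot>\<^sub>v q1 + b \<cdot>\<^sub>v q2 = 0\<^sub>v n" and e2: "a \<cdot>\<^sub>v u + b \<cdot>\<^sub>v u = 0\<^sub>v n"
      using q u z by (auto simp: append_vec_eq[of _ "n+n"] append_vec_eq[of _ n])
    from arg_cong[OF e2, of "\<lambda>x. x $ i"] i u have "(a + b) * u $ i = 0" by (simp add: distrib_right)
    hence ab1: "a + b = 0" using i by simp
    have "(a \<cdot>\<^sub>v q1 + b \<cdot>\<^sub>v q2) $ i = a * q1 $ i + b * q2 $ i" using q i by simp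
    also have "q1 $ i = (1/s) * (?P *\<^sub>v u) $ i" unfolding q1_def using i carrier_vecD[OF Pu] by simp
    also have "q2 $ i = - (1/s) * (?P *\<^sub>v u) $ i" unfolding q2_def using i carrier_vecD[OF Pu] by simp
    finally have "a * (1/s * (?P *\<^sub>v u) $ i) + b * (- (1/s) * (?P *\<^sub>v u) $ i) = 0"
      using e1 i by simp
    hence "(a - b) / s * (?P *\<^sub>v u) $ i = 0" by (auto simp: field_simps)
    hence "a - b = 0" using pi s0 by simp
    with ab1 show ?thesis by simp
  qed
  show ?thesis unfolding has_invariant_2block_def mat2_idx
    using v Lv1 Lv2 indep by blast
qed

lemma block_G_nz:
  assumes mpos: "\<forall>i<n. m i > 0" and ev: "eigenvector (Gmat n m \<phi> * Minv n m) u lam"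
    and lam: "lam \<noteq> 0" and s: "s^2 = lam"
  shows "has_invariant_2block (Lmat n m \<phi> \<omega>) (mat2 s 0 0 (-s))"
proof -
  note c = Minv_carrier[of n m] Homega_carrier[of n m \<phi> \<omega>] Gmat_carrier[of n m \<phi>]
  let ?P = "Minv n m" and ?H = "Homega n m \<phi> \<omega>" and ?G = "Gmat n m \<phi>" and ?L = "Lmat n m \<phi> \<omega>"
  have u: "u \<in> carrier_vec n" "u \<noteq> 0\<^sub>v n" and eq: "(?G * ?P) *\<^sub>v u = lam \<cdot>\<^sub>v u"
    using ev c unfolding eigenvector_def by auto
  have Hu: "?G *\<^sub>v (?P *\<^sub>v u) = lam \<cdot>\<^sub>v u" using eq c u by (simp add: assoc_mult_mat_vec)
  have s0: "s \<noteq> 0" using lam s by auto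
  define z where "z = (0\<^sub>v n :: complex vec)"
  have z: "z \<in> carrier_vec n" unfolding z_def by simp
  have Pz: "?P *\<^sub>v z = z" and Gz: "?H *\<^sub>v z = z" unfolding z_def using c by (auto simp: mult_zero_vec')
  have Pu: "?P *\<^sub>v u \<in> carrier_vec n" using c u by simp
  have szz: "a \<cdot>\<^sub>v z = z" for a :: complex unfolding z_def by (intro eq_vecI) auto
  have zz: "z + z = z" unfolding z_def by (intro eq_vecI) auto
  have gen: "?L *\<^sub>v ((z @\<^sub>v (1/t) \<cdot>\<^sub>v (?P *\<^sub>v u)) @\<^sub>v (z @\<^sub>v u))
     = ((z @\<^sub>v t \<cdot>\<^sub>v ((1/t) \<cdot>\<^sub>v (?P *\<^sub>v u))) @\<^sub>v (z @\<^sub>v (t \<cdot>\<^sub>v u)))" if t: "t^2 = lam" for t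
  proof -
    have t0: "t \<noteq> 0" using lam t by auto
    have e1: "?P *\<^sub>v u = t \<cdot>\<^sub>v ((1/t) \<cdot>\<^sub>v (?P *\<^sub>v u))" using t0 Pu by (intro eq_vecI) auto
    have e2: "?G *\<^sub>v ((1/t) \<cdot>\<^sub>v (?P *\<^sub>v u)) = t \<cdot>\<^sub>v u"
    proof -
      have "?G *\<^sub>v ((1/t) \<cdot>\<^sub>v (?P *\<^sub>v u)) = (1/t) \<cdot>\<^sub>v (lam \<cdot>\<^sub>v u)"
        using mult_mat_vec[OF c(3) Pu] Hu by simp
      also have "\<dots> = t \<cdot>\<^sub>v u" using t t0 u by (intro eq_vecI) (auto simp: power2_eq_square)
      finally show ?thesis .
    qed
    show ?thesis
      by (subst Lmat_mult) (use Pu u z in auto, simp add: Pz Gz e2 flip: e1)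
  qed
  define q1 where "q1 = (1/s) \<cdot>\<^sub>v (?P *\<^sub>v u)"
  define q2 where "q2 = (1/(-s)) \<cdot>\<^sub>v (?P *\<^sub>v u)"
  define v1 where "v1 = (z @\<^sub>v q1) @\<^sub>v (z @\<^sub>v u)"
  define v2 where "v2 = (z @\<^sub>v q2) @\<^sub>v (z @\<^sub>v u)"
  have q: "q1 \<in> carrier_vec n" "q2 \<in> carrier_vec n" unfolding q1_def q2_def using Pu by auto
  have dimL: "dim_row ?L = n + n + (n + n)" by (rule Lmat_dim)
  have v: "v1 \<in> carrier_vec (dim_row ?L)" "v2 \<in> carrier_vec (dim_row ?L)"
    unfolding dimL v1_def v2_def using q u z by auto
  have Lv1: "?L *\<^sub>v v1 = s \<cdot>\<^sub>v v1 + 0 \<cdot>\<^sub>v v2"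
    unfolding v1_def v2_def gen[OF s, folded q1_def]
    by (subst lc4[of _ n], use q u z in auto, simp add: sm0[of _ n] q u z szz zz smz[unfolded z_def[symmetric]])
  have s2: "(-s)^2 = lam" using s by simp
  have Lv2: "?L *\<^sub>v v2 = 0 \<cdot>\<^sub>v v1 + (-s) \<cdot>\<^sub>v v2"
    unfolding v1_def v2_def gen[OF s2, folded q2_def]
    by (subst lc4[of _ n], use q u z in auto, simp add: sm0'[of _ n] q u z szz zz smz[unfolded z_def[symmetric]])
  have indep: "a = 0 \<and> b = 0" if ab: "a \<cdot>\<^sub>v v1 + b \<cdot>\<^sub>v v2 = 0\<^sub>v (dim_row ?L)" for a b
  proof -
    obtain i where i: "i < n" "u $ i \<noteq> 0" using nonzero_vec_idx[OF u] by blast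
    have pi: "(?P *\<^sub>v u) $ i \<noteq> 0" by (rule Minv_nz[OF mpos u(1) i])
    have "((a \<cdot>\<^sub>v z + b \<cdot>\<^sub>v z) @\<^sub>v (a \<cdot>\<^sub>v q1 + b \<cdot>\<^sub>v q2)) @\<^sub>v ((a \<cdot>\<^sub>v z + b \<cdot>\<^sub>v z) @\<^sub>v (a \<cdot>\<^sub>v u + b \<cdot>\<^sub>v u))
       = (0\<^sub>v n @\<^sub>v 0\<^sub>v n) @\<^sub>v (0\<^sub>v n @\<^sub>v 0\<^sub>v n)"
      using ab unfolding dimL zero4 v1_def v2_def by (subst (asm) lc4[of _ n]) (use q u z in auto)
    hence e1: "a \<cdot>\<^sub>v q1 + b \<cdot>\<^sub>v q2 = 0\<^sub>v n" and e2: "a \<cdot>\<^sub>v u + b \<cdot>\<^sub>v u = 0\<^sub>v n"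
      using q u z by (auto simp: append_vec_eq[of _ "n+n"] append_vec_eq[of _ n])
    from arg_cong[OF e2, of "\<lambda>x. x $ i"] i u have "(a + b) * u $ i = 0" by (simp add: distrib_right)
    hence ab1: "a + b = 0" using i by simp
    have "(a \<cdot>\<^sub>v q1 + b \<cdot>\<^sub>v q2) $ i = a * q1 $ i + b * q2 $ i" using q i by simp
    also have "q1 $ i = (1/s) * (?P *\<^sub>v u) $ i" unfolding q1_def using i carrier_vecD[OF Pu] by simp
    also have "q2 $ i = - (1/s) * (?P *\<^sub>v u) $ i" unfolding q2_def using i carrier_vecD[OF Pu] by simp
    finally have "a * (1/s * (?P *\<^sub>v u) $ i) + b * (- (1/s) * (?P *\<^sub>v u) $ i) = 0"
      using e1 i by simp
    hence "(a - b) / s * (?P *\<^sub>v u) $ i = 0" by (auto simp: field_simps)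
    hence "a - b = 0" using pi s0 by simp
    with ab1 show ?thesis by simp
  qed
  show ?thesis unfolding has_invariant_2block_def mat2_idx
    using v Lv1 Lv2 indep by blast
qed

lemma block_H_zero:
  assumes mpos: "\<forall>i<n. m i > 0" and ev: "eigenvector (Homega n m \<phi> \<omega> * Minv n m) u 0"
  shows "has_invariant_2block (Lmat n m \<phi> \<omega>) (mat2 0 1 0 0)"
proof -
  note c = Minv_carrier[of n m] Homega_carrier[of n m \<phi> \<omega>] Gmat_carrier[of n m \<phi>]
  let ?P = "Minv n m" and ?H = "Homega n m \<phi> \<omega>" and ?G = "Gmat n m \<phi>" and ?L = "Lmat n m \<phi> \<omega>"
  have u: "u \<in> carrier_vec n" "u \<noteq> 0\<^sub>v n" and eq: "(?H * ?P) *\<^sub>v u = 0 \<cdot>\<^sub>v u"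
    using ev c unfolding eigenvector_def by auto
  define z where "z = (0\<^sub>v n :: complex vec)"
  have z: "z \<in> carrier_vec n" unfolding z_def by simp
  have zx: "0 \<cdot>\<^sub>v x = z" if "x \<in> carrier_vec n" for x :: "complex vec"
    unfolding z_def using that by (intro eq_vecI) auto
  have Hu: "?H *\<^sub>v (?P *\<^sub>v u) = z" using eq c u zx[OF u(1)] by (simp add: assoc_mult_mat_vec)
  have Pz: "?P *\<^sub>v z = z" and Gz: "?G *\<^sub>v z = z" and Hz: "?H *\<^sub>v z = z" unfolding z_def using c by (auto simp: mult_zero_vec')
  have Pu: "?P *\<^sub>v u \<in> carrier_vec n" using c u by simp
  have szz: "a \<cdot>\<^sub>v z = z" for a :: complex unfolding z_def by (intro eq_vecI) auto
  have zz: "z + z = z" unfolding z_def by (intro eq_vecI) auto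
  define v1 where "v1 = ((?P *\<^sub>v u) @\<^sub>v z) @\<^sub>v (z @\<^sub>v z)"
  define v2 where "v2 = (z @\<^sub>v z) @\<^sub>v (u @\<^sub>v z)"
  have dimL: "dim_row ?L = n + n + (n + n)" by (rule Lmat_dim)
  have v: "v1 \<in> carrier_vec (dim_row ?L)" "v2 \<in> carrier_vec (dim_row ?L)"
    unfolding dimL v1_def v2_def using Pu u z by auto
  have Lv1: "?L *\<^sub>v v1 = 0 \<cdot>\<^sub>v v1 + 0 \<cdot>\<^sub>v v2"
    unfolding v1_def v2_def
    by (subst Lmat_mult, use Pu u z in auto, subst lc4[of _ n], use Pu u z in auto,
        simp add: sm0[of _ n] Pu u z szz zz Pz Gz Hu zx)
  have Lv2: "?L *\<^sub>v v2 = 1 \<cdot>\<^sub>v v1 + 0 \<cdot>\<^sub>v v2"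
  proof -
    have "?L *\<^sub>v v2 = ((?P *\<^sub>v u) @\<^sub>v z) @\<^sub>v (z @\<^sub>v z)"
      unfolding v2_def using Lmat_mult[OF z z u(1) z, of m \<phi> \<omega>] Pz Gz Hz by simp
    also have "\<dots> = ((1 \<cdot>\<^sub>v (?P *\<^sub>v u) + 0 \<cdot>\<^sub>v z) @\<^sub>v (1 \<cdot>\<^sub>v z + 0 \<cdot>\<^sub>v z)) @\<^sub>v ((1 \<cdot>\<^sub>v z + 0 \<cdot>\<^sub>v u) @\<^sub>v (1 \<cdot>\<^sub>v z + 0 \<cdot>\<^sub>v z))"
      by (simp only: sm0''[OF Pu z] sm0''[OF z z] sm0''[OF z u(1)] sm1[OF Pu] sm1[OF z])
    also have "\<dots> = 1 \<cdot>\<^sub>v v1 + 0 \<cdot>\<^sub>v v2"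
      unfolding v1_def v2_def by (rule lc4[OF Pu z z z z z u(1) z, symmetric])
    finally show ?thesis .
  qed
  have indep: "a = 0 \<and> b = 0" if ab: "a \<cdot>\<^sub>v v1 + b \<cdot>\<^sub>v v2 = 0\<^sub>v (dim_row ?L)" for a b
  proof -
    obtain i where i: "i < n" "u $ i \<noteq> 0" using nonzero_vec_idx[OF u] by blast
    have pi: "(?P *\<^sub>v u) $ i \<noteq> 0" by (rule Minv_nz[OF mpos u(1) i])
    have "((a \<cdot>\<^sub>v (?P *\<^sub>v u) + b \<cdot>\<^sub>v z) @\<^sub>v (a \<cdot>\<^sub>v z + b \<cdot>\<^sub>v z)) @\<^sub>v ((a \<cdot>\<^sub>v z + b \<cdot>\<^sub>v u) @\<^sub>v (a \<cdot>\<^sub>v z + b \<cdot>\<^sub>v z))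
       = (0\<^sub>v n @\<^sub>v 0\<^sub>v n) @\<^sub>v (0\<^sub>v n @\<^sub>v 0\<^sub>v n)"
      using ab unfolding dimL zero4 v1_def v2_def by (subst (asm) lc4[of _ n]) (use Pu u z in auto)
    hence e1: "a \<cdot>\<^sub>v (?P *\<^sub>v u) + b \<cdot>\<^sub>v z = 0\<^sub>v n" and e2: "a \<cdot>\<^sub>v z + b \<cdot>\<^sub>v u = 0\<^sub>v n"
      using Pu u z by (auto simp: append_vec_eq[of _ "n+n"] append_vec_eq[of _ n])
    have "(a \<cdot>\<^sub>v (?P *\<^sub>v u) + b \<cdot>\<^sub>v z) $ i = a * (?P *\<^sub>v u) $ i" using carrier_vecD[OF Pu] i unfolding z_def by simp
    hence "a = 0" using e1 i pi by simp
    moreover have "(a \<cdot>\<^sub>v z + b \<cdot>\<^sub>v u) $ i = b * u $ i" using carrier_vecD[OF u(1)] i unfolding z_def by simp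
    hence "b = 0" using e2 i by simp
    ultimately show ?thesis by simp
  qed
  show ?thesis unfolding has_invariant_2block_def mat2_idx
    using v Lv1 Lv2 indep by blast
qed

lemma block_G_zero:
  assumes mpos: "\<forall>i<n. m i > 0" and ev: "eigenvector (Gmat n m \<phi> * Minv n m) u 0"
  shows "has_invariant_2block (Lmat n m \<phi> \<omega>) (mat2 0 1 0 0)"
proof -
  note c = Minv_carrier[of n m] Homega_carrier[of n m \<phi> \<omega>] Gmat_carrier[of n m \<phi>]
  let ?P = "Minv n m" and ?H = "Homega n m \<phi> \<omega>" and ?G = "Gmat n m \<phi>" and ?L = "Lmat n m \<phi> \<omega>"
  have u: "u \<in> carrier_vec n" "u \<noteq> 0\<^sub>v n" and eq: "(?G * ?P) *\<^sub>v u = 0 \<cdot>\<^sub>v u"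
    using ev c unfolding eigenvector_def by auto
  define z where "z = (0\<^sub>v n :: complex vec)"
  have z: "z \<in> carrier_vec n" unfolding z_def by simp
  have zx: "0 \<cdot>\<^sub>v x = z" if "x \<in> carrier_vec n" for x :: "complex vec"
    unfolding z_def using that by (intro eq_vecI) auto
  have Hu: "?G *\<^sub>v (?P *\<^sub>v u) = z" using eq c u zx[OF u(1)] by (simp add: assoc_mult_mat_vec)
  have Pz: "?P *\<^sub>v z = z" and Gz: "?G *\<^sub>v z = z" and Hz: "?H *\<^sub>v z = z" unfolding z_def using c by (auto simp: mult_zero_vec')
  have Pu: "?P *\<^sub>v u \<in> carrier_vec n" using c u by simp
  have szz: "a \<cdot>\<^sub>v z = z" for a :: complex unfolding z_def by (intro eq_vecI) auto
  have zz: "z + z = z" unfolding z_def by (intro eq_vecI) auto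
  define v1 where "v1 = (z @\<^sub>v (?P *\<^sub>v u)) @\<^sub>v (z @\<^sub>v z)"
  define v2 where "v2 = (z @\<^sub>v z) @\<^sub>v (z @\<^sub>v u)"
  have dimL: "dim_row ?L = n + n + (n + n)" by (rule Lmat_dim)
  have v: "v1 \<in> carrier_vec (dim_row ?L)" "v2 \<in> carrier_vec (dim_row ?L)"
    unfolding dimL v1_def v2_def using Pu u z by auto
  have Lv1: "?L *\<^sub>v v1 = 0 \<cdot>\<^sub>v v1 + 0 \<cdot>\<^sub>v v2"
  proof -
    have "?L *\<^sub>v v1 = (z @\<^sub>v z) @\<^sub>v (z @\<^sub>v z)"
      unfolding v1_def using Lmat_mult[OF z Pu z z, of m \<phi> \<omega>] Pz Hz Hu by simp
    also have "\<dots> = ((0 \<cdot>\<^sub>v z + 0 \<cdot>\<^sub>v z) @\<^sub>v (0 \<cdot>\<^sub>v (?P *\<^sub>v u) + 0 \<cdot>\<^sub>v z)) @\<^sub>v ((0 \<cdot>\<^sub>v z + 0 \<cdot>\<^sub>v z) @\<^sub>v (0 \<cdot>\<^sub>v z + 0 \<cdot>\<^sub>v u))"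
      by (simp only: zx[OF Pu] zx[OF z] zx[OF u(1)] zz)
    also have "\<dots> = 0 \<cdot>\<^sub>v v1 + 0 \<cdot>\<^sub>v v2"
      unfolding v1_def v2_def by (rule lc4[OF z Pu z z z z z u(1), symmetric])
    finally show ?thesis .
  qed
  have Lv2: "?L *\<^sub>v v2 = 1 \<cdot>\<^sub>v v1 + 0 \<cdot>\<^sub>v v2"
  proof -
    have "?L *\<^sub>v v2 = (z @\<^sub>v (?P *\<^sub>v u)) @\<^sub>v (z @\<^sub>v z)"
      unfolding v2_def using Lmat_mult[OF z z z u(1), of m \<phi> \<omega>] Pz Gz Hz by simp
    also have "\<dots> = ((1 \<cdot>\<^sub>v z + 0 \<cdot>\<^sub>v z) @\<^sub>v (1 \<cdot>\<^sub>v (?P *\<^sub>v u) + 0 \<cdot>\<^sub>v z)) @\<^sub>v ((1 \<cdot>\<^sub>v z + 0 \<cdot>\<^sub>v z) @\<^sub>v (1 \<cdot>\<^sub>v z + 0 \<cdot>\<^sub>v u))"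
      by (simp only: sm0''[OF Pu z] sm0''[OF z z] sm0''[OF z u(1)] sm1[OF Pu] sm1[OF z])
    also have "\<dots> = 1 \<cdot>\<^sub>v v1 + 0 \<cdot>\<^sub>v v2"
      unfolding v1_def v2_def by (rule lc4[OF z Pu z z z z z u(1), symmetric])
    finally show ?thesis .
  qed
  have indep: "a = 0 \<and> b = 0" if ab: "a \<cdot>\<^sub>v v1 + b \<cdot>\<^sub>v v2 = 0\<^sub>v (dim_row ?L)" for a b
  proof -
    obtain i where i: "i < n" "u $ i \<noteq> 0" using nonzero_vec_idx[OF u] by blast
    have pi: "(?P *\<^sub>v u) $ i \<noteq> 0" by (rule Minv_nz[OF mpos u(1) i])
    have "((a \<cdot>\<^sub>v z + b \<cdot>\<^sub>v z) @\<^sub>v (a \<cdot>\<^sub>v (?P *\<^sub>v u) + b \<cdot>\<^sub>v z)) @\<^sub>v ((a \<cdot>\<^sub>v z + b \<cdot>\<^sub>v z) @\<^sub>v (a \<cdot>\<^sub>v z + b \<cdot>\<^sub>v u))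
       = (0\<^sub>v n @\<^sub>v 0\<^sub>v n) @\<^sub>v (0\<^sub>v n @\<^sub>v 0\<^sub>v n)"
      using ab unfolding dimL zero4 v1_def v2_def by (subst (asm) lc4[of _ n]) (use Pu u z in auto)
    hence e1: "a \<cdot>\<^sub>v (?P *\<^sub>v u) + b \<cdot>\<^sub>v z = 0\<^sub>v n" and e2: "a \<cdot>\<^sub>v z + b \<cdot>\<^sub>v u = 0\<^sub>v n"
      using Pu u z by (auto simp: append_vec_eq[of _ "n+n"] append_vec_eq[of _ n])
    have "(a \<cdot>\<^sub>v (?P *\<^sub>v u) + b \<cdot>\<^sub>v z) $ i = a * (?P *\<^sub>v u) $ i" using carrier_vecD[OF Pu] i unfolding z_def by simp
    hence "a = 0" using e1 i pi by simp
    moreover have "(a \<cdot>\<^sub>v z + b \<cdot>\<^sub>v u) $ i = b * u $ i" using carrier_vecD[OF u(1)] i unfolding z_def by simp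
    hence "b = 0" using e2 i by simp
    ultimately show ?thesis by simp
  qed
  show ?thesis unfolding has_invariant_2block_def mat2_idx
    using v Lv1 Lv2 indep by blast
qed

theorem lemma2:
  fixes n :: nat and m :: "nat \<Rightarrow> real" and \<omega> :: real and \<phi> :: "nat \<Rightarrow> real"
  assumes "n \<ge> 3"
    and "\<forall>i<n. m i > 0"
    and "fixed_point n m (\<lambda>i. equator_pt (\<phi> i))"
  shows "diagonalizable (Homega n m \<phi> \<omega> * Minv n m)
       \<and> diagonalizable (Gmat n m \<phi> * Minv n m)
       \<and> (\<forall>u lam. (eigenvector (Homega n m \<phi> \<omega> * Minv n m) u lam \<or> eigenvector (Gmat n m \<phi> * Minv n m) u lam)
              \<longrightarrow> lam \<noteq> 0 \<longrightarrow>
              (\<forall>s. s^2 = lam \<longrightarrow> has_invariant_2block (Lmat n m \<phi> \<omega>) (mat2 s 0 0 (-s))))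
       \<and> (\<forall>u. (eigenvector (Homega n m \<phi> \<omega> * Minv n m) u 0 \<or> eigenvector (Gmat n m \<phi> * Minv n m) u 0)
              \<longrightarrow> has_invariant_2block (Lmat n m \<phi> \<omega>) (mat2 0 1 0 0))"
  using diag_part1[OF assms(2)] diag_part2[OF assms(2)]
    block_H_nz[OF assms(2)] block_G_nz[OF assms(2)] block_H_zero[OF assms(2)] block_G_zero[OF assms(2)]
  by blast
end
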